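(* Let $K,G,m_0,A_g,B_g,\bar f_c,\bar f_t>0$, $e\in[0.5,1]$, $m_g'(p)=A_g e^{\frac{p-\bar f_t/3}{B_g\bar f_c}}$, and $\hat f(p,\varrho,\varrho_e)=\frac32\left(\frac{\varrho}{\bar f_c}\right)^2+m_0\left(\frac{\varrho_e}{\sqrt6\bar f_c}+\frac{p}{\bar f_c}\right)-1$. Let $\boldsymbol\sigma^{tr}\in\mathbb R^{3\times3}_{sym}$ with $p^{tr}=p(\boldsymbol\sigma^{tr})$, $\varrho^{tr}=\varrho(\boldsymbol\sigma^{tr})$, $r_e^{tr}=r_e(\cos\theta(\boldsymbol\sigma^{tr}))$, $\varrho_e^{tr}=\varrho_e(\boldsymbol\sigma^{tr})$. For $\gamma\ge0$ let $\hat p_{tr}(\gamma)$ be the unique real $p_\gamma$ with $p_\gamma+\gamma K m_g'(p_\gamma)/\bar f_c=p^{tr}$, let $\hat\varrho_{tr}(\gamma)$ be the unique real $\varrho_\gamma$ with $\varrho_\gamma=\big[\varrho^{tr}-\gamma2G\big(\frac{3\varrho_\gamma}{\bar f_c^2}+\frac{m_0}{\sqrt6\bar f_c}\big)\big]^+$, and $$q_{tr}(\gamma)=\frac32\Big(\frac{\hat\varrho_{tr}(\gamma)}{\bar f_c}\Big)^2+m_0\Big(\frac{\hat\varrho_{tr}(\gamma)r_e^{tr}}{\sqrt6\bar f_c}+\frac{\hat p_{tr}(\gamma)}{\bar f_c}\Big)-1.$$ Assume $\hat f(p^{tr},\varrho^{tr},\varrho_e^{tr})>0$. Then there exists a unique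 $\triangle\lambda>0$ with $q_{tr}(\triangle\lambda)=0$. Furthermore, each of the following problems has a unique solution: (R) find $(p,\varrho,\triangle\lambda)$ with $p=p^{tr}-\triangle\lambda K\frac{m_g'(p)}{\bar f_c}$, $\varrho=\big[\varrho^{tr}-\triangle\lambda2G\big(\frac{3\varrho}{\bar f_c^2}+\frac{m_0}{\sqrt6\bar f_c}\big)\big]^+$, $\hat f(p,\varrho,\varrho r_e^{tr})=0$; (P) find $(\boldsymbol\sigma,\triangle\lambda)$ with $\boldsymbol\sigma=\boldsymbol\sigma^{tr}-\triangle\lambda\big[K\frac{m_g'(p(\boldsymbol\sigma))}{\bar f_c}\mathbf I+2G\big(\frac{3\varrho(\boldsymbol\sigma)}{\bar f_c^2}+\frac{m_0}{\sqrt6\bar f_c}\big)\hat{\mathbf n}\big]$ for some $\hat{\mathbf n}\in\partial\varrho(\boldsymbol\sigma)$, $\triangle\lambda\ge0$, $\hat f(p(\boldsymbol\sigma),\varrho(\boldsymbol\sigma),\varrho_e(\boldsymbol\sigma))\le0$, $\triangle\lambda\hat f(p(\boldsymbol\sigma),\varrho(\boldsymbol\sigma),\varrho_e(\boldsymbol\sigma))=0$. In addition, if $q_{tr}\big(\sqrt6\bar f_c\varrho^{tr}/(2Gm_0)\big)<0$ then $\triangle\lambda\in\big(0,\sqrt6\bar f_c\varrho^{tr}/(2Gm_0)\big)$ and $\varrho>0$; conversely, if $q_{tr}\big(\sqrt6\bar f_c\varrho^{tr}/(2Gm_0)\big)\ge0$ then $\triangle\lambda\ge\sqrt6\bar f_c\varrho^{tr}/(2Gm_0)$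 and $\varrho=0$ (with $\varrho$ the corresponding component of the solution of (R)).
   Context: $\mathbb R^{3\times3}_{sym}$: real symmetric $3\times3$ matrices with Frobenius product ":" and norm; $\mathbf I$ identity; $p(\boldsymbol\sigma)=\frac13\mathbf I:\boldsymbol\sigma$, $\mathbf s(\boldsymbol\sigma)=\boldsymbol\sigma-p(\boldsymbol\sigma)\mathbf I$, $\varrho(\boldsymbol\sigma)=\|\mathbf s(\boldsymbol\sigma)\|$; for $\varrho(\boldsymbol\sigma)>0$, $\theta(\boldsymbol\sigma)=\frac13\arccos\big(\frac{3\sqrt3}{2}J_3/J_2^{3/2}\big)$ with $J_2=\frac12\mathbf s:\mathbf s$, $J_3=\frac13\mathbf s^3:\mathbf I$. $r_e(\cos\theta)=\frac{4(1-e^2)\cos^2\theta+(2e-1)^2}{2(1-e^2)\cos\theta+(2e-1)\sqrt{4(1-e^2)\cos^2\theta+5e^2-4e}}$; $\varrho_e(\boldsymbol\sigma)=\varrho(\boldsymbol\sigma)r_e(\cos\theta(\boldsymbol\sigma))$ if $\varrho(\boldsymbol\sigma)>0$ and $0$ otherwise. When $\varrho^{tr}=0$, products of the form $(\cdot)\,r_e^{tr}$ with a vanishing factor are interpreted as $0$. $(x)^+=\max\{0,x\}$. $\partial\varrho(\boldsymbol\sigma)=\{\mathbf s(\boldsymbol\sigma)/\varrho(\boldsymbol\sigma)\}$ if $\varrho(\boldsymbol\sigma)>0$, and $\{\hat{\mathbf n}\in\mathbb R^{3\times3}_{sym}:\mathbf I:\hat{\mathbf n}=0,\|\hat{\mathbf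 n}\|\le1\}$ if $\varrho(\boldsymbol\sigma)=0$. *)

theory Defs
  imports "HOL-Analysis.Analysis"
begin

type_synonym mat3 = "real^3^3"

definition Sym :: "mat3 set" where "Sym = {A. transpose A = A}"

definition frob :: "mat3 \<Rightarrow> mat3 \<Rightarrow> real" where
  "frob A B = (\<Sum>i\<in>UNIV. \<Sum>j\<in>UNIV. A$i$j * B$i$j)"

definition fnorm :: "mat3 \<Rightarrow> real" where "fnorm A = sqrt (frob A A)"

definition Id3 :: mat3 where "Id3 = mat 1"

definition pm :: "mat3 \<Rightarrow> real" where "pm \<sigma> = frob Id3 \<sigma> / 3"

definition dev :: "mat3 \<Rightarrow> mat3" where "dev \<sigma> = \<sigma> - pm \<sigma> *\<^sub>R Id3"

definition rho :: "mat3 \<Rightarrow> real" where "rho \<sigma> = fnorm (dev \<sigma>)"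

definition J2 :: "mat3 \<Rightarrow> real" where "J2 \<sigma> = frob (dev \<sigma>) (dev \<sigma>) / 2"

definition J3 :: "mat3 \<Rightarrow> real" where
  "J3 \<sigma> = frob (dev \<sigma> ** dev \<sigma> ** dev \<sigma>) Id3 / 3"

definition theta :: "mat3 \<Rightarrow> real" where
  "theta \<sigma> = arccos (3 * sqrt 3 / 2 * J3 \<sigma> / (J2 \<sigma> powr (3/2))) / 3"

definition r_e :: "real \<Rightarrow> real \<Rightarrow> real" where
  "r_e e c = (4 * (1 - e^2) * c^2 + (2*e - 1)^2) /
             (2 * (1 - e^2) * c + (2*e - 1) * sqrt (4 * (1 - e^2) * c^2 + 5 * e^2 - 4 * e))"

definition rho_e :: "real \<Rightarrow> mat3 \<Rightarrow> real" where
  "rho_e e \<sigma> = (if rho \<sigma> > 0 then rho \<sigma> * r_e e (cos (theta \<sigma>)) else 0)"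

text \<open>r_e^tr; when rho(sigma^tr) = 0 it only occurs in products with a vanishing factor,
  which are interpreted as 0; we set it to 0 in that case.\<close>
definition r_e_tr :: "real \<Rightarrow> mat3 \<Rightarrow> real" where
  "r_e_tr e \<sigma> = (if rho \<sigma> > 0 then r_e e (cos (theta \<sigma>)) else 0)"

definition subdiff_rho :: "mat3 \<Rightarrow> mat3 set" where
  "subdiff_rho \<sigma> = (if rho \<sigma> > 0 then {(1 / rho \<sigma>) *\<^sub>R dev \<sigma>}
      else {n \<in> Sym. frob Id3 n = 0 \<and> fnorm n \<le> 1})"

definition pos :: "real \<Rightarrow> real" where "pos x = max 0 x"

definition mg' :: "real \<Rightarrow> real \<Rightarrow> real \<Rightarrow> real \<Rightarrow> real \<Rightarrow> real" where
  "mg' Ag Bg fc ft p = Ag * exp ((p - ft / 3) / (Bg * fc))"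

definition fhat :: "real \<Rightarrow> real \<Rightarrow> real \<Rightarrow> real \<Rightarrow> real \<Rightarrow> real" where
  "fhat m0 fc p \<rho> \<rho>e = 3/2 * (\<rho> / fc)^2 + m0 * (\<rho>e / (sqrt 6 * fc) + p / fc) - 1"

definition phat_tr :: "real \<Rightarrow> real \<Rightarrow> real \<Rightarrow> real \<Rightarrow> real \<Rightarrow> real \<Rightarrow> real \<Rightarrow> real" where
  "phat_tr K Ag Bg fc ft ptr \<gamma> = (THE x. x + \<gamma> * K * mg' Ag Bg fc ft x / fc = ptr)"

definition rhohat_tr :: "real \<Rightarrow> real \<Rightarrow> real \<Rightarrow> real \<Rightarrow> real \<Rightarrow> real" where
  "rhohat_tr G m0 fc rtr \<gamma> =
     (THE x. x = pos (rtr - \<gamma> * 2 * G * (3 * x / fc^2 + m0 / (sqrt 6 * fc))))"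

definition q_tr :: "real \<Rightarrow> real \<Rightarrow> real \<Rightarrow> real \<Rightarrow> real \<Rightarrow> real \<Rightarrow> real \<Rightarrow> real
                    \<Rightarrow> mat3 \<Rightarrow> real \<Rightarrow> real" where
  "q_tr K G m0 Ag Bg fc ft e \<sigma>tr \<gamma> =
     (let r = rhohat_tr G m0 fc (rho \<sigma>tr) \<gamma>; p = phat_tr K Ag Bg fc ft (pm \<sigma>tr) \<gamma>
      in 3/2 * (r / fc)^2 + m0 * (r * r_e_tr e \<sigma>tr / (sqrt 6 * fc) + p / fc) - 1)"

definition probR :: "real \<Rightarrow> real \<Rightarrow> real \<Rightarrow> real \<Rightarrow> real \<Rightarrow> real \<Rightarrow> real \<Rightarrow> real
                    \<Rightarrow> mat3 \<Rightarrow> real \<Rightarrow> real \<Rightarrow> real \<Rightarrow> bool" where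
  "probR K G m0 Ag Bg fc ft e \<sigma>tr p \<rho> dl \<longleftrightarrow>
     p = pm \<sigma>tr - dl * K * mg' Ag Bg fc ft p / fc \<and>
     \<rho> = pos (rho \<sigma>tr - dl * 2 * G * (3 * \<rho> / fc^2 + m0 / (sqrt 6 * fc))) \<and>
     fhat m0 fc p \<rho> (\<rho> * r_e_tr e \<sigma>tr) = 0"

definition probP :: "real \<Rightarrow> real \<Rightarrow> real \<Rightarrow> real \<Rightarrow> real \<Rightarrow> real \<Rightarrow> real \<Rightarrow> real
                    \<Rightarrow> mat3 \<Rightarrow> mat3 \<Rightarrow> real \<Rightarrow> bool" where
  "probP K G m0 Ag Bg fc ft e \<sigma>tr \<sigma> dl \<longleftrightarrow>
     \<sigma> \<in> Sym \<and>
     (\<exists>n \<in> subdiff_rho \<sigma>.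
        \<sigma> = \<sigma>tr - dl *\<^sub>R (( K * mg' Ag Bg fc ft (pm \<sigma>) / fc) *\<^sub>R Id3
              + (2 * G * (3 * rho \<sigma> / fc^2 + m0 / (sqrt 6 * fc))) *\<^sub>R n)) \<and>
     dl \<ge> 0 \<and>
     fhat m0 fc (pm \<sigma>) (rho \<sigma>) (rho_e e \<sigma>) \<le> 0 \<and>
     dl * fhat m0 fc (pm \<sigma>) (rho \<sigma>) (rho_e e \<sigma>) = 0"

end

theory Submission
  imports Defs "HOL-Analysis.Analysis"
begin


lemma frob_inner: "frob A B = inner A B"
  by (simp add: frob_def inner_vec_def)

lemma sym_entry: "transpose s = s \<Longrightarrow> s$j$i = s$i$j"
proof -
  assume "transpose s = s"
  hence "(transpose s)$i$j = s$i$j" by simp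
  thus ?thesis by (simp add: transpose_def)
qed

lemma key_ineq:
  fixes s :: mat3
  assumes sy: "transpose s = s" and tr: "frob Id3 s = 0"
  shows "(frob (s ** s ** s) Id3)^2 \<le> (frob s s)^3 / 6"
proof -
  define a where "a = s$1$1"
  define b where "b = s$2$2"
  define d where "d = s$1$2"
  define e where "e = s$1$3"
  define f where "f = s$2$3"
  have s21: "s$2$1 = d" "s$3$1 = e" "s$3$2 = f" using sym_entry[OF sy] by (auto simp: d_def e_def f_def)
  have s33: "s$3$3 = - a - b" using tr by (simp add: frob_def sum_3 Id3_def mat_def a_def b_def) 
  define t2 where "t2 = frob s s"
  define W where "W = s ** s - (t2/3) *\<^sub>R Id3"
  have c1: "inner s W = frob (s ** s ** s) Id3"
    unfolding W_def t2_def frob_def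
    by (simp add: inner_vec_def sum_3 Id3_def mat_def matrix_matrix_mult_def s21 s33 flip: a_def b_def d_def e_def f_def; algebra)
  have c2: "inner W W = t2^2/6"
    unfolding W_def t2_def frob_def
    by (simp add: inner_vec_def sum_3 Id3_def mat_def matrix_matrix_mult_def s21 s33 flip: a_def b_def d_def e_def f_def; algebra)
  have c3: "inner s s = t2" unfolding t2_def frob_inner ..
  have "(inner s W)^2 \<le> inner s s * inner W W" by (rule Cauchy_Schwarz_ineq)
  then show ?thesis using c1 c2 c3 t2_def by (simp add: power2_eq_square power3_eq_cube)
qed


lemma fnorm_norm: "fnorm A = norm A"
  by (simp add: fnorm_def frob_inner norm_eq_sqrt_inner)

lemma frob_Id3: "frob Id3 Id3 = 3"
  by (simp add: frob_def sum_3 Id3_def mat_def)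

lemma pm_Id3[simp]: "pm Id3 = 1" by (simp add: pm_def frob_Id3)
lemma pm_add: "pm (A + B) = pm A + pm B" by (simp add: pm_def frob_inner inner_add_right add_divide_distrib)
lemma pm_diff: "pm (A - B) = pm A - pm B" by (simp add: pm_def frob_inner inner_diff_right diff_divide_distrib)
lemma pm_scale: "pm (k *\<^sub>R A) = k * pm A" by (simp add: pm_def frob_inner)
lemma pm_dev[simp]: "pm (dev A) = 0" by (simp add: dev_def pm_diff pm_scale)
lemma frob_Id3_dev: "frob Id3 (dev A) = 0" using pm_dev[of A] by (simp add: pm_def)
lemma dev_add: "dev (A + B) = dev A + dev B" by (simp add: dev_def pm_add algebra_simps)
lemma dev_diff: "dev (A - B) = dev A - dev B" by (simp add: dev_def pm_diff algebra_simps)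
lemma dev_scale: "dev (k *\<^sub>R A) = k *\<^sub>R dev A" by (simp add: dev_def pm_scale algebra_simps)
lemma dev_Id3[simp]: "dev Id3 = 0" by (simp add: dev_def)
lemma dev_pm0: "pm A = 0 \<Longrightarrow> dev A = A" by (simp add: dev_def)
lemma decomp: "A = pm A *\<^sub>R Id3 + dev A" by (simp add: dev_def)
lemma rho_norm: "rho A = norm (dev A)" by (simp add: rho_def fnorm_norm)
lemma rho_nonneg: "rho A \<ge> 0" by (simp add: rho_norm)
lemma Id3_sym: "Id3 \<in> Sym" by (simp add: Sym_def Id3_def transpose_mat)
lemma Sym_add: "A \<in> Sym \<Longrightarrow> B \<in> Sym \<Longrightarrow> A + B \<in> Sym" by (simp add: Sym_def transpose_def vec_eq_iff)
lemma Sym_diff: "A \<in> Sym \<Longrightarrow> B \<in> Sym \<Longrightarrow> A - B \<in> Sym" by (simp add: Sym_def transpose_def vec_eq_iff)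
lemma Sym_scale: "A \<in> Sym \<Longrightarrow> k *\<^sub>R A \<in> Sym" by (simp add: Sym_def transpose_def vec_eq_iff)
lemma Sym_dev: "A \<in> Sym \<Longrightarrow> dev A \<in> Sym" by (simp add: dev_def Sym_diff Sym_scale Id3_sym)

lemma J2_eq: "J2 A = rho A ^ 2 / 2"
  by (simp add: J2_def rho_norm frob_inner power2_norm_eq_inner)


lemma r_e_nonneg:
  assumes "1/2 \<le> e" "e \<le> 1" "1/2 \<le> c" "c \<le> 1"
  shows "r_e e c \<ge> 0"
proof -
  have "c*c \<ge> (1/2)*(1/2)" using assms(3) by (intro mult_mono) auto
  hence c2: "c^2 \<ge> 1/4" by (simp add: power2_eq_square)
  have e2: "1 - e^2 \<ge> 0" using assms by (simp add: power_le_one)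
  have "(1 - e^2) * (4 * c^2) \<ge> (1 - e^2) * 1"
    using c2 e2 by (intro mult_left_mono) auto
  hence "4 * (1 - e^2) * c^2 \<ge> 1 - e^2" by (simp add: algebra_simps)
  hence "4 * (1 - e^2) * c^2 + 5 * e^2 - 4 * e \<ge> (2*e-1)^2" by (simp add: power2_eq_square algebra_simps)
  hence "4 * (1 - e^2) * c^2 + 5 * e^2 - 4 * e \<ge> 0" using zero_le_power2[of "2*e-1"] by linarith
  hence sq: "sqrt (4 * (1 - e^2) * c^2 + 5 * e^2 - 4 * e) \<ge> 0" by simp
  have den: "2 * (1 - e^2) * c + (2*e - 1) * sqrt (4 * (1 - e^2) * c^2 + 5 * e^2 - 4 * e) \<ge> 0"
    using e2 sq assms by (intro add_nonneg_nonneg mult_nonneg_nonneg) auto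
  have num: "4 * (1 - e^2) * c^2 + (2*e - 1)^2 \<ge> 0" using e2 by simp
  show ?thesis unfolding r_e_def using den num by simp
qed


lemma sm1: "(k *\<^sub>R A) ** B = k *\<^sub>R (A ** B)" for A B :: mat3
  by (simp add: scalar_matrix_assoc)
lemma sm2: "A ** (k *\<^sub>R B) = k *\<^sub>R (A ** B)" for A B :: mat3
  by (metis matrix_scalar_ac scalar_matrix_assoc)

lemma theta_scale:
  assumes "dev A = k *\<^sub>R dev B" "k > 0"
  shows "theta A = theta B"
proof -
  have j2: "J2 A = k^2 * J2 B" using assms by (simp add: J2_def frob_inner power2_eq_square)
  have m: "(k *\<^sub>R X) ** (k *\<^sub>R X) ** (k *\<^sub>R X) = (k^3) *\<^sub>R (X ** X ** X)" for X :: mat3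
    by (simp only: sm1 sm2 scaleR_scaleR power3_eq_cube mult.assoc)
  have j3: "J3 A = k^3 * J3 B" using assms
    by (simp add: J3_def frob_inner m)
  have "J2 B \<ge> 0" by (simp add: J2_eq)
  have "(k^2) powr (3/2) = (k powr (real 2)) powr (3/2)" using assms(2) by (simp only: powr_realpow)
  also have "\<dots> = k powr (real 3)" by (simp add: powr_powr)
  also have "\<dots> = k^3" using assms(2) by (simp only: powr_realpow)
  finally have "(k^2) powr (3/2) = k^3" .
  hence p: "J2 A powr (3/2) = k^3 * J2 B powr (3/2)" using assms(2) j2 `J2 B \<ge> 0`
    by (simp add: powr_mult)
  show ?thesis unfolding theta_def j3 p using assms(2) by (simp add: mult.assoc)
qed

lemma cos_theta_bounds:
  assumes "A \<in> Sym" "rho A > 0"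
  shows "1/2 \<le> cos (theta A) \<and> cos (theta A) \<le> 1"
proof -
  define s where "s = dev A"
  have sy: "transpose s = s" using Sym_dev[OF assms(1)] by (simp add: Sym_def s_def)
  have ki: "(frob (s ** s ** s) Id3)^2 \<le> (frob s s)^3 / 6"
    by (rule key_ineq[OF sy]) (simp add: s_def frob_Id3_dev)
  define t2 where "t2 = frob s s"
  define t3 where "t3 = frob (s ** s ** s) Id3"
  have t2: "t2 = rho A ^ 2" by (simp add: t2_def s_def rho_norm frob_inner power2_norm_eq_inner)
  have t2p: "t2 > 0" using assms(2) t2 by simp
  have J2: "J2 A = t2/2" by (simp add: J2_def t2_def s_def)
  have J3: "J3 A = t3/3" by (simp add: J3_def t3_def s_def)
  define x where "x = 3 * sqrt 3 / 2 * J3 A / (J2 A powr (3/2))"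
  have "(J2 A powr (3/2))^2 = J2 A powr (3/2) * J2 A powr (3/2)" by (simp add: power2_eq_square)
  also have "\<dots> = J2 A powr (real 3)" by (simp add: powr_add[symmetric])
  also have "\<dots> = J2 A ^ 3" using t2p J2 by (simp only: powr_realpow)
  finally have pw0: "(J2 A powr (3/2))^2 = J2 A ^ 3" .
  have pw: "(J2 A powr (3/2))^2 = (t2/2)^3" using pw0 unfolding J2 .
  have pwp: "J2 A powr (3/2) > 0" using t2p J2 by simp
  have "x^2 = (3 * sqrt 3 / 2)^2 * (J3 A)^2 / (J2 A powr (3/2))^2"
    by (simp add: x_def power_divide power_mult_distrib)
  also have "\<dots> = 27/4 * (t3/3)^2 / (t2/2)^3" unfolding pw J3 by (simp add: power_divide power_mult_distrib)
  also have "\<dots> = 6 * t3^2 / t2^3" by (simp add: field_simps power_divide)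
  also have "\<dots> \<le> 1" using ki t2p by (simp add: t2_def t3_def divide_le_eq)
  finally have "x^2 \<le> 1" .
  hence xb: "-1 \<le> x" "x \<le> 1" using abs_le_square_iff[of x 1] by auto
  have th: "theta A = arccos x / 3" by (simp add: theta_def x_def)
  have "0 \<le> arccos x" "arccos x \<le> pi" using arccos_bounded[OF xb] by auto
  hence tb: "0 \<le> theta A" "theta A \<le> pi/3" using th by auto
  have "cos (pi/3) \<le> cos (theta A)"
    using tb by (intro cos_monotone_0_pi_le) auto
  thus ?thesis by (simp add: cos_60)
qed


definition Rf :: "real \<Rightarrow> real \<Rightarrow> real \<Rightarrow> real \<Rightarrow> real \<Rightarrow> real" where
  "Rf G m0 fc rtr \<gamma> = max 0 (rtr - \<gamma> * (2 * G * (m0 / (sqrt 6 * fc)))) / (1 + \<gamma> * (2 * G * (3 / fc^2)))"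

definition Qf where
  "Qf K G m0 Ag Bg fc ft ptr rtr r \<gamma> = fhat m0 fc (phat_tr K Ag Bg fc ft ptr \<gamma>) (Rf G m0 fc rtr \<gamma>) (Rf G m0 fc rtr \<gamma> * r)"

context
  fixes K G m0 Ag Bg fc ft ptr rtr r :: real
  assumes K: "K > 0" and G: "G > 0" and m0: "m0 > 0" and Ag: "Ag > 0" and Bg: "Bg > 0"
    and fc: "fc > 0" and rtr: "rtr \<ge> 0" and r: "r \<ge> 0"
    and H: "fhat m0 fc ptr rtr (rtr * r) > 0"
begin

lemma g_pos: "mg' Ag Bg fc ft x > 0"
  using Ag by (simp add: mg'_def)

lemma g_mono: "x \<le> y \<Longrightarrow> mg' Ag Bg fc ft x \<le> mg' Ag Bg fc ft y"
  using Ag Bg fc by (simp add: mg'_def divide_right_mono)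

lemma g_cont: "continuous_on S (mg' Ag Bg fc ft)"
  unfolding mg'_def using Bg fc by (intro continuous_intros) auto

lemma pe_strict:
  assumes "\<gamma> \<ge> 0" "x < y"
  shows "x + \<gamma> * K * mg' Ag Bg fc ft x / fc < y + \<gamma> * K * mg' Ag Bg fc ft y / fc"
proof -
  have "\<gamma> * K * mg' Ag Bg fc ft x \<le> \<gamma> * K * mg' Ag Bg fc ft y"
    using assms K g_mono[of x y] by (intro mult_left_mono) auto
  hence "\<gamma> * K * mg' Ag Bg fc ft x / fc \<le> \<gamma> * K * mg' Ag Bg fc ft y / fc"
    using fc by (simp add: divide_right_mono)
  thus ?thesis using assms by linarith
qed

lemma phat_ex1:
  assumes "\<gamma> \<ge> 0"
  shows "\<exists>!x. x + \<gamma> * K * mg' Ag Bg fc ft x / fc = ptr"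
proof -
  let ?f = "\<lambda>x. x + \<gamma> * K * mg' Ag Bg fc ft x / fc"
  define a where "a = ptr - \<gamma> * K * mg' Ag Bg fc ft ptr / fc"
  have gp: "\<gamma> * K * mg' Ag Bg fc ft ptr / fc \<ge> 0"
    using assms K fc g_pos[of ptr] by simp
  have ab: "a \<le> ptr" using gp by (simp add: a_def)
  have "\<gamma> * K * mg' Ag Bg fc ft a \<le> \<gamma> * K * mg' Ag Bg fc ft ptr"
    using assms K g_mono[OF ab] by (intro mult_left_mono) auto
  hence "\<gamma> * K * mg' Ag Bg fc ft a / fc \<le> \<gamma> * K * mg' Ag Bg fc ft ptr / fc"
    using fc by (simp add: divide_right_mono)
  hence fa: "?f a \<le> ptr" by (simp add: a_def)
  have fb: "ptr \<le> ?f ptr" using gp by simp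
  have "continuous_on {a..ptr} ?f"
    using fc Bg unfolding mg'_def by (intro continuous_intros) auto
  then obtain x where "?f x = ptr" using IVT'[of ?f a ptr ptr, OF fa fb ab] by blast
  moreover have "?f y = ptr \<Longrightarrow> y = x" if "?f x = ptr" for y
    using pe_strict[OF assms, of x y] pe_strict[OF assms, of y x] that by (cases x y rule: linorder_cases) auto
  ultimately show ?thesis by blast
qed

lemma phat_eq: "\<gamma> \<ge> 0 \<Longrightarrow> phat_tr K Ag Bg fc ft ptr \<gamma> + \<gamma> * K * mg' Ag Bg fc ft (phat_tr K Ag Bg fc ft ptr \<gamma>) / fc = ptr"
  unfolding phat_tr_def by (rule theI'[OF phat_ex1])

lemma phat_unique: "\<gamma> \<ge> 0 \<Longrightarrow> x + \<gamma> * K * mg' Ag Bg fc ft x / fc = ptr \<Longrightarrow> phat_tr K Ag Bg fc ft ptr \<gamma> = x"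
  unfolding phat_tr_def by (rule the1_equality[OF phat_ex1])

lemma phat_0: "phat_tr K Ag Bg fc ft ptr 0 = ptr"
  by (rule phat_unique) auto

lemma phat_anti:
  assumes "0 \<le> \<gamma>1" "\<gamma>1 < \<gamma>2"
  shows "phat_tr K Ag Bg fc ft ptr \<gamma>2 < phat_tr K Ag Bg fc ft ptr \<gamma>1"
proof (rule ccontr)
  define p1 where "p1 = phat_tr K Ag Bg fc ft ptr \<gamma>1"
  define p2 where "p2 = phat_tr K Ag Bg fc ft ptr \<gamma>2"
  assume "\<not> ?thesis"
  hence le: "p1 \<le> p2" by (simp add: p1_def p2_def)
  have e1: "p1 + \<gamma>1 * K * mg' Ag Bg fc ft p1 / fc = ptr" using phat_eq assms by (simp add: p1_def)
  have e2: "p2 + \<gamma>2 * K * mg' Ag Bg fc ft p2 / fc = ptr" using phat_eq assms by (simp add: p2_def)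
  have "\<gamma>1 * (K * mg' Ag Bg fc ft p1) \<le> \<gamma>1 * (K * mg' Ag Bg fc ft p2)"
    using assms K g_mono[OF le] by (intro mult_left_mono) auto
  also have "\<dots> < \<gamma>2 * (K * mg' Ag Bg fc ft p2)"
    using assms K g_pos[of p2] by (intro mult_strict_right_mono) auto
  finally have "\<gamma>1 * K * mg' Ag Bg fc ft p1 / fc < \<gamma>2 * K * mg' Ag Bg fc ft p2 / fc"
    using fc by (simp add: divide_strict_right_mono mult.assoc)
  thus False using e1 e2 le by linarith
qed

lemma rho_iff:
  assumes g: "\<gamma> \<ge> 0"
  shows "(x = pos (rtr - \<gamma> * 2 * G * (3 * x / fc^2 + m0 / (sqrt 6 * fc)))) \<longleftrightarrow> x = Rf G m0 fc rtr \<gamma>"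
proof -
  define A where "A = \<gamma> * (2 * G * (3 / fc^2))"
  define B where "B = \<gamma> * (2 * G * (m0 / (sqrt 6 * fc)))"
  have A: "A \<ge> 0" using g G fc by (simp add: A_def)
  have B: "B \<ge> 0" using g G fc m0 by (simp add: B_def)
  have ex: "\<gamma> * 2 * G * (3 * x / fc^2 + m0 / (sqrt 6 * fc)) = A * x + B"
    by (simp add: A_def B_def algebra_simps)
  have R: "Rf G m0 fc rtr \<gamma> = max 0 (rtr - B) / (1 + A)" by (simp add: Rf_def A_def B_def)
  have A1: "1 + A > 0" using A by simp
  show ?thesis unfolding ex R pos_def
  proof (cases "rtr - B > 0")
    case True
    define v where "v = (rtr - B) / (1 + A)"
    have v: "v * (1 + A) = rtr - B" using A1 by (simp add: v_def)
    have vp: "v > 0" using True A1 by (simp add: v_def)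
    have "x = max 0 (rtr - (A * x + B)) \<longleftrightarrow> x = v"
    proof
      assume x: "x = max 0 (rtr - (A * x + B))"
      show "x = v"
      proof (cases "x > 0")
        case True
        hence "x = rtr - (A * x + B)" using x by (simp add: max_def split: if_splits)
        hence "x * (1 + A) = v * (1 + A)" using v by (simp add: algebra_simps)
        thus ?thesis using A1 by simp
      next
        case False
        hence "x = 0" using x by (simp add: max_def split: if_splits)
        thus ?thesis using x \<open>rtr - B > 0\<close> by simp
      qed
    next
      assume "x = v"
      moreover have "rtr - (A * v + B) = v" using v by (simp add: algebra_simps)
      ultimately show "x = max 0 (rtr - (A * x + B))" using vp by simp
    qed
    thus "(x = max 0 (rtr - (A * x + B))) = (x = max 0 (rtr - B) / (1 + A))"
      using True by (simp add: v_def)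
  next
    case False
    have "x = max 0 (rtr - (A * x + B)) \<longleftrightarrow> x = 0"
    proof
      assume x: "x = max 0 (rtr - (A * x + B))"
      show "x = 0"
      proof (rule ccontr)
        assume "x \<noteq> 0"
        hence "x > 0" using x by (simp add: max_def split: if_splits)
        hence "x = rtr - (A * x + B)" using x by (simp add: max_def split: if_splits)
        moreover have "A * x \<ge> 0" using A \<open>x > 0\<close> by simp
        ultimately show False using False \<open>x > 0\<close> by linarith
      qed
    next
      assume "x = 0" thus "x = max 0 (rtr - (A * x + B))" using False by simp
    qed
    thus "(x = max 0 (rtr - (A * x + B))) = (x = max 0 (rtr - B) / (1 + A))"
      using False by simp
  qed
qed

lemma rhohat_eq: "\<gamma> \<ge> 0 \<Longrightarrow> rhohat_tr G m0 fc rtr \<gamma> = Rf G m0 fc rtr \<gamma>"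
  unfolding rhohat_tr_def using rho_iff by simp

lemma Rf_nonneg: "\<gamma> \<ge> 0 \<Longrightarrow> Rf G m0 fc rtr \<gamma> \<ge> 0"
  using G fc by (simp add: Rf_def)

lemma Rf_0: "Rf G m0 fc rtr 0 = rtr"
  using rtr by (simp add: Rf_def)

lemma Rf_anti:
  assumes "0 \<le> \<gamma>1" "\<gamma>1 \<le> \<gamma>2"
  shows "Rf G m0 fc rtr \<gamma>2 \<le> Rf G m0 fc rtr \<gamma>1"
proof -
  define a where "a = 2 * G * (3 / fc^2)"
  define b where "b = 2 * G * (m0 / (sqrt 6 * fc))"
  have a: "a \<ge> 0" and b: "b \<ge> 0" using G fc m0 by (auto simp: a_def b_def)
  have "\<gamma>1 * b \<le> \<gamma>2 * b" using assms b by (simp add: mult_right_mono)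
  hence n: "max 0 (rtr - \<gamma>2 * b) \<le> max 0 (rtr - \<gamma>1 * b)" by simp
  have "\<gamma>1 * a \<le> \<gamma>2 * a" using assms a by (simp add: mult_right_mono)
  hence d: "1 + \<gamma>1 * a \<le> 1 + \<gamma>2 * a" by simp
  have d1: "1 + \<gamma>1 * a > 0" using assms a by (simp add: add_pos_nonneg)
  have "max 0 (rtr - \<gamma>2 * b) / (1 + \<gamma>2 * a) \<le> max 0 (rtr - \<gamma>1 * b) / (1 + \<gamma>2 * a)"
    using n d d1 by (intro divide_right_mono) auto
  also have "\<dots> \<le> max 0 (rtr - \<gamma>1 * b) / (1 + \<gamma>1 * a)"
    using d d1 by (intro divide_left_mono) auto
  finally show ?thesis by (simp add: Rf_def a_def b_def)
qed

lemma Rf_zero_iff: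
  assumes "\<gamma> \<ge> 0"
  shows "Rf G m0 fc rtr \<gamma> = 0 \<longleftrightarrow> \<gamma> \<ge> sqrt 6 * fc * rtr / (2 * G * m0)"
proof -
  define b where "b = 2 * G * (m0 / (sqrt 6 * fc))"
  have bp: "b > 0" using G fc m0 by (simp add: b_def)
  have T: "sqrt 6 * fc * rtr / (2 * G * m0) = rtr / b" by (simp add: b_def field_simps)
  have d1: "1 + \<gamma> * (2 * G * (3 / fc^2)) > 0" using assms G fc by (simp add: add_pos_nonneg)
  have "Rf G m0 fc rtr \<gamma> = 0 \<longleftrightarrow> max 0 (rtr - \<gamma> * b) = 0"
    using d1 by (simp add: Rf_def b_def)
  also have "\<dots> \<longleftrightarrow> rtr \<le> \<gamma> * b" by auto
  also have "\<dots> \<longleftrightarrow> rtr / b \<le> \<gamma>" using bp by (simp add: divide_le_eq)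
  finally show ?thesis using T by simp
qed

lemma fhat_mono:
  assumes "p \<le> p'" "0 \<le> \<rho>" "\<rho> \<le> \<rho>'"
  shows "fhat m0 fc p \<rho> (\<rho> * r) \<le> fhat m0 fc p' \<rho>' (\<rho>' * r)"
    and "p < p' \<Longrightarrow> fhat m0 fc p \<rho> (\<rho> * r) < fhat m0 fc p' \<rho>' (\<rho>' * r)"
proof -
  have "(\<rho>/fc)^2 \<le> (\<rho>'/fc)^2" using assms fc by (intro power_mono divide_right_mono) auto
  moreover have "\<rho> * r / (sqrt 6 * fc) \<le> \<rho>' * r / (sqrt 6 * fc)"
    using assms fc r by (intro divide_right_mono mult_right_mono) auto
  moreover have "p / fc \<le> p' / fc" using assms fc by (simp add: divide_right_mono)
  ultimately have "m0 * (\<rho> * r / (sqrt 6 * fc) + p / fc) \<le> m0 * (\<rho>' * r / (sqrt 6 * fc) + p' / fc)"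
    and *: "3/2 * (\<rho>/fc)^2 \<le> 3/2 * (\<rho>'/fc)^2"
    using m0 by (auto intro!: mult_left_mono)
  thus "fhat m0 fc p \<rho> (\<rho> * r) \<le> fhat m0 fc p' \<rho>' (\<rho>' * r)" by (simp add: fhat_def)
  assume "p < p'"
  hence "p / fc < p' / fc" using fc by (simp add: divide_strict_right_mono)
  hence "m0 * (\<rho> * r / (sqrt 6 * fc) + p / fc) < m0 * (\<rho>' * r / (sqrt 6 * fc) + p' / fc)"
    using m0 \<open>\<rho> * r / (sqrt 6 * fc) \<le> \<rho>' * r / (sqrt 6 * fc)\<close> by (intro mult_strict_left_mono) auto
  thus "fhat m0 fc p \<rho> (\<rho> * r) < fhat m0 fc p' \<rho>' (\<rho>' * r)" using * by (simp add: fhat_def)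
qed

lemma Qf_strict:
  assumes "0 \<le> \<gamma>1" "\<gamma>1 < \<gamma>2"
  shows "Qf K G m0 Ag Bg fc ft ptr rtr r \<gamma>2 < Qf K G m0 Ag Bg fc ft ptr rtr r \<gamma>1"
  unfolding Qf_def
  using fhat_mono(2)[OF less_imp_le[OF phat_anti[OF assms]] Rf_nonneg Rf_anti[OF assms(1) less_imp_le[OF assms(2)]]
      phat_anti[OF assms]] assms by auto

lemma Qf_mono:
  assumes "0 \<le> \<gamma>1" "\<gamma>1 \<le> \<gamma>2"
  shows "Qf K G m0 Ag Bg fc ft ptr rtr r \<gamma>2 \<le> Qf K G m0 Ag Bg fc ft ptr rtr r \<gamma>1"
  using Qf_strict[OF assms(1)] assms by (cases "\<gamma>1 = \<gamma>2") (auto intro: less_imp_le)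

lemma Qf_0: "Qf K G m0 Ag Bg fc ft ptr rtr r 0 > 0"
  using H by (simp add: Qf_def phat_0 Rf_0)

lemma Qf_root_ex: "\<exists>dl>0. Qf K G m0 Ag Bg fc ft ptr rtr r dl = 0"
proof -
  let ?g = "mg' Ag Bg fc ft"
  define gp where "gp = (\<lambda>p. (ptr - p) * fc / (K * ?g p))"
  define h where "h = (\<lambda>p. fhat m0 fc p (Rf G m0 fc rtr (gp p)) (Rf G m0 fc rtr (gp p) * r))"
  have gp_nn: "p \<le> ptr \<Longrightarrow> gp p \<ge> 0" for p using K fc g_pos[of p] by (simp add: gp_def)
  have phat_gp: "p \<le> ptr \<Longrightarrow> phat_tr K Ag Bg fc ft ptr (gp p) = p" for p
    by (rule phat_unique[OF gp_nn]) (use K g_pos[of p] fc in \<open>auto simp: gp_def\<close>)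
  have Qh: "p \<le> ptr \<Longrightarrow> Qf K G m0 Ag Bg fc ft ptr rtr r (gp p) = h p" for p
    by (simp add: Qf_def h_def phat_gp)
  define b where "b = 2 * G * (m0 / (sqrt 6 * fc))"
  have bp: "b > 0" using G fc m0 by (simp add: b_def)
  define T where "T = sqrt 6 * fc * rtr / (2 * G * m0)"
  have Tn: "T \<ge> 0" using G fc m0 rtr by (simp add: T_def)
  define p0 where "p0 = min 0 (ptr - T * K * ?g ptr / fc) - 1"
  have "T * K * ?g ptr / fc \<ge> 0" using Tn K fc g_pos[of ptr] by simp
  hence p0: "p0 < ptr" "p0 < 0" "ptr - p0 \<ge> T * K * ?g ptr / fc"
    by (auto simp: p0_def)
  have "T * K * ?g ptr / fc * fc / (K * ?g ptr) \<le> (ptr - p0) * fc / (K * ?g ptr)"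
    using p0(3) fc K g_pos[of ptr] by (intro divide_right_mono mult_right_mono) auto
  hence "T \<le> (ptr - p0) * fc / (K * ?g ptr)" using fc K g_pos[of ptr] by simp
  also have "\<dots> \<le> (ptr - p0) * fc / (K * ?g p0)"
    using p0 fc K g_pos[of p0] g_mono[of p0 ptr] by (intro divide_left_mono mult_left_mono mult_pos_pos) auto
  finally have "T \<le> gp p0" by (simp add: gp_def)
  hence "Rf G m0 fc rtr (gp p0) = 0" using Rf_zero_iff[OF gp_nn] p0 by (simp add: T_def)
  moreover have "m0 * p0 < fc" using p0 m0 fc by (smt (verit) mult_pos_neg)
  ultimately have hp0: "h p0 < 0" using p0 m0 fc by (simp add: h_def fhat_def mult_pos_neg divide_neg_pos)
  have hptr: "h ptr > 0" using Qh[of ptr] Qf_0 by (simp add: gp_def)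
  have den: "\<forall>p\<in>{p0..ptr}. 1 + gp p * (2 * G * (3 / fc^2)) \<noteq> 0"
  proof
    fix p assume "p \<in> {p0..ptr}"
    hence "gp p * (2 * G * (3 / fc^2)) \<ge> 0" using gp_nn[of p] G fc by simp
    thus "1 + gp p * (2 * G * (3 / fc^2)) \<noteq> 0" by linarith
  qed
  have "continuous_on {p0..ptr} h"
    unfolding h_def fhat_def Rf_def gp_def using den unfolding gp_def mg'_def
    using K Ag Bg fc by (intro continuous_intros) auto
  then obtain ps where ps: "p0 \<le> ps" "ps \<le> ptr" "h ps = 0"
    using IVT'[of h p0 0 ptr] hp0 hptr p0 by auto
  have "ps \<noteq> ptr" using ps hptr by auto
  hence "ps < ptr" using ps by simp
  hence "gp ps > 0" using K fc g_pos[of ps] by (simp add: gp_def)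
  moreover have "Qf K G m0 Ag Bg fc ft ptr rtr r (gp ps) = 0" using Qh ps by simp
  ultimately show ?thesis by blast
qed

lemma Qf_ex1: "\<exists>!dl. dl > 0 \<and> Qf K G m0 Ag Bg fc ft ptr rtr r dl = 0"
proof -
  obtain d where d: "d > 0" "Qf K G m0 Ag Bg fc ft ptr rtr r d = 0" using Qf_root_ex by blast
  moreover have "y = d" if "y > 0" "Qf K G m0 Ag Bg fc ft ptr rtr r y = 0" for y
    using Qf_strict[of y d] Qf_strict[of d y] that d by (cases y d rule: linorder_cases) auto
  ultimately show ?thesis by blast
qed

lemma R_char:
  "(p = ptr - dl * K * mg' Ag Bg fc ft p / fc \<and>
     \<rho> = pos (rtr - dl * 2 * G * (3 * \<rho> / fc^2 + m0 / (sqrt 6 * fc))) \<and>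
     fhat m0 fc p \<rho> (\<rho> * r) = 0)
   \<longleftrightarrow> (dl > 0 \<and> Qf K G m0 Ag Bg fc ft ptr rtr r dl = 0 \<and> p = phat_tr K Ag Bg fc ft ptr dl
        \<and> \<rho> = Rf G m0 fc rtr dl)"
proof
  assume A: "p = ptr - dl * K * mg' Ag Bg fc ft p / fc \<and>
     \<rho> = pos (rtr - dl * 2 * G * (3 * \<rho> / fc^2 + m0 / (sqrt 6 * fc))) \<and>
     fhat m0 fc p \<rho> (\<rho> * r) = 0"
  have dl: "dl > 0"
  proof (rule ccontr)
    assume "\<not> dl > 0"
    hence d: "dl \<le> 0" by simp
    have "dl * K * mg' Ag Bg fc ft p / fc \<le> 0"
      using d K fc g_pos[of p] by (simp add: mult_nonpos_nonneg divide_nonpos_pos)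
    hence pp: "ptr \<le> p" using A by linarith
    have r0: "\<rho> \<ge> 0" using A by (metis pos_def max.cobounded1)
    have "3 * \<rho> / fc^2 + m0 / (sqrt 6 * fc) \<ge> 0" using r0 fc m0 by simp
    hence "dl * 2 * G * (3 * \<rho> / fc^2 + m0 / (sqrt 6 * fc)) \<le> 0"
      using d G by (simp add: mult_nonpos_nonneg)
    moreover have "\<rho> \<ge> rtr - dl * 2 * G * (3 * \<rho> / fc^2 + m0 / (sqrt 6 * fc))"
      using A unfolding pos_def by (metis max.cobounded2)
    ultimately have "rtr \<le> \<rho>" by linarith
    hence "fhat m0 fc ptr rtr (rtr * r) \<le> fhat m0 fc p \<rho> (\<rho> * r)"
      using fhat_mono(1)[OF pp rtr] by simp
    thus False using A H by simp
  qed
  have p: "p = phat_tr K Ag Bg fc ft ptr dl"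
    using A dl by (intro phat_unique[symmetric]) auto
  have \<rho>: "\<rho> = Rf G m0 fc rtr dl" using A dl rho_iff[of dl \<rho>] by auto
  show "dl > 0 \<and> Qf K G m0 Ag Bg fc ft ptr rtr r dl = 0 \<and> p = phat_tr K Ag Bg fc ft ptr dl
        \<and> \<rho> = Rf G m0 fc rtr dl"
    using dl p \<rho> A by (simp add: Qf_def)
next
  assume A: "dl > 0 \<and> Qf K G m0 Ag Bg fc ft ptr rtr r dl = 0 \<and> p = phat_tr K Ag Bg fc ft ptr dl
        \<and> \<rho> = Rf G m0 fc rtr dl"
  have "p + dl * K * mg' Ag Bg fc ft p / fc = ptr" using A phat_eq[of dl] by simp
  moreover have "\<rho> = pos (rtr - dl * 2 * G * (3 * \<rho> / fc^2 + m0 / (sqrt 6 * fc)))"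
    using A rho_iff[of dl \<rho>] by simp
  ultimately show "p = ptr - dl * K * mg' Ag Bg fc ft p / fc \<and>
     \<rho> = pos (rtr - dl * 2 * G * (3 * \<rho> / fc^2 + m0 / (sqrt 6 * fc))) \<and>
     fhat m0 fc p \<rho> (\<rho> * r) = 0" using A by (auto simp: Qf_def)
qed

end


definition Sf :: "mat3 \<Rightarrow> real \<Rightarrow> real \<Rightarrow> mat3" where
  "Sf \<sigma>tr p \<rho> = p *\<^sub>R Id3 + (if rho \<sigma>tr > 0 then (\<rho> / rho \<sigma>tr) *\<^sub>R dev \<sigma>tr else 0)"

lemma norm_dev_rho: "norm (dev A) = rho A" by (simp add: rho_norm)

lemma frob_Id3_scale: "frob Id3 (k *\<^sub>R A) = k * frob Id3 A" by (simp add: frob_inner)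

lemma pm_zero[simp]: "pm 0 = 0" by (simp add: pm_def frob_def)
lemma dev_zero[simp]: "dev 0 = 0" by (simp add: dev_def)
lemma dev_dev[simp]: "dev (dev A) = dev A" by (simp add: dev_pm0)

context
  fixes K G m0 Ag Bg fc ft e :: real and \<sigma>tr :: mat3
  assumes K: "K > 0" and G: "G > 0" and m0: "m0 > 0" and Ag: "Ag > 0" and Bg: "Bg > 0"
    and fc: "fc > 0" and ft: "ft > 0" and e1: "1/2 \<le> e" and e2: "e \<le> 1"
    and Str: "\<sigma>tr \<in> Sym"
    and H0: "fhat m0 fc (pm \<sigma>tr) (rho \<sigma>tr) (rho_e e \<sigma>tr) > 0"
begin

lemma r_nonneg: "r_e_tr e \<sigma>tr \<ge> 0"
proof (cases "rho \<sigma>tr > 0")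
  case True
  thus ?thesis using cos_theta_bounds[OF Str True] r_e_nonneg e1 e2 by (simp add: r_e_tr_def)
qed (simp add: r_e_tr_def)

lemma rho_e_tr: "rho_e e \<sigma>tr = rho \<sigma>tr * r_e_tr e \<sigma>tr"
  by (simp add: rho_e_def r_e_tr_def)

lemma H: "fhat m0 fc (pm \<sigma>tr) (rho \<sigma>tr) (rho \<sigma>tr * r_e_tr e \<sigma>tr) > 0"
  using H0 rho_e_tr by simp

lemmas ctx = K G m0 Ag Bg fc rho_nonneg[of \<sigma>tr] r_nonneg H

lemma q_eq: "\<gamma> \<ge> 0 \<Longrightarrow> q_tr K G m0 Ag Bg fc ft e \<sigma>tr \<gamma>
   = Qf K G m0 Ag Bg fc ft (pm \<sigma>tr) (rho \<sigma>tr) (r_e_tr e \<sigma>tr) \<gamma>"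
  by (simp add: q_tr_def Qf_def Let_def fhat_def rhohat_eq[OF ctx])

lemma probR_iff: "probR K G m0 Ag Bg fc ft e \<sigma>tr p \<rho> dl \<longleftrightarrow>
   (dl > 0 \<and> Qf K G m0 Ag Bg fc ft (pm \<sigma>tr) (rho \<sigma>tr) (r_e_tr e \<sigma>tr) dl = 0
     \<and> p = phat_tr K Ag Bg fc ft (pm \<sigma>tr) dl \<and> \<rho> = Rf G m0 fc (rho \<sigma>tr) dl)"
  unfolding probR_def by (rule R_char[OF ctx])

lemma P_to_R:
  assumes P: "probP K G m0 Ag Bg fc ft e \<sigma>tr \<sigma> dl"
  shows "probR K G m0 Ag Bg fc ft e \<sigma>tr (pm \<sigma>) (rho \<sigma>) dl \<and> \<sigma> = Sf \<sigma>tr (pm \<sigma>) (rho \<sigma>)"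
proof -
  define c1 where "c1 = K * mg' Ag Bg fc ft (pm \<sigma>) / fc"
  define c2 where "c2 = 2 * G * (3 * rho \<sigma> / fc^2 + m0 / (sqrt 6 * fc))"
  define r where "r = r_e_tr e \<sigma>tr"
  define \<rho>s where "\<rho>s = rho \<sigma>"
  define rtr where "rtr = rho \<sigma>tr"
  from P obtain n where n: "n \<in> subdiff_rho \<sigma>" and eq: "\<sigma> = \<sigma>tr - dl *\<^sub>R (c1 *\<^sub>R Id3 + c2 *\<^sub>R n)"
    and dl0: "dl \<ge> 0" and fle: "fhat m0 fc (pm \<sigma>) (rho \<sigma>) (rho_e e \<sigma>) \<le> 0"
    and fz: "dl * fhat m0 fc (pm \<sigma>) (rho \<sigma>) (rho_e e \<sigma>) = 0"
    unfolding probP_def c1_def c2_def by blast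
  have \<rho>s0: "\<rho>s \<ge> 0" by (simp add: \<rho>s_def rho_nonneg)
  have c2p: "c2 > 0" using G fc m0 \<rho>s0 by (simp add: c2_def \<rho>s_def add_nonneg_pos)
  have pmn: "pm n = 0"
  proof (cases "rho \<sigma> > 0")
    case True thus ?thesis using n by (simp add: subdiff_rho_def pm_scale)
  next
    case False thus ?thesis using n by (simp add: subdiff_rho_def pm_def)
  qed
  have pmeq: "pm \<sigma> = pm \<sigma>tr - dl * c1"
    using pmn by (subst eq) (simp add: pm_diff pm_add pm_scale)
  have deveq: "dev \<sigma> = dev \<sigma>tr - (dl * c2) *\<^sub>R n"
    using pmn by (subst eq) (simp add: dev_diff dev_add dev_scale dev_pm0)
  have dlp: "dl > 0"
  proof (rule ccontr)
    assume "\<not> dl > 0"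
    hence "dl = 0" using dl0 by simp
    hence "\<sigma> = \<sigma>tr" using eq by simp
    thus False using fle H0 by simp
  qed
  have main: "\<rho>s = pos (rtr - dl * c2) \<and> rho_e e \<sigma> = \<rho>s * r \<and> \<sigma> = Sf \<sigma>tr (pm \<sigma>) \<rho>s"
  proof (cases "\<rho>s > 0")
    case True
    hence nn: "n = (1 / \<rho>s) *\<^sub>R dev \<sigma>" using n by (simp add: subdiff_rho_def \<rho>s_def)
    define k where "k = 1 + dl * c2 / \<rho>s"
    have kp: "k > 0" using dlp c2p True by (simp add: k_def add_pos_nonneg)
    have dtr: "dev \<sigma>tr = k *\<^sub>R dev \<sigma>"
      using deveq True unfolding nn k_def by (simp add: algebra_simps)
    have rtr: "rtr = k * \<rho>s" using dtr kp by (simp add: rtr_def \<rho>s_def flip: norm_dev_rho)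
    have rtr2: "rtr = \<rho>s + dl * c2" using rtr True by (simp add: k_def algebra_simps)
    have rtrp: "rtr > 0" using rtr kp True by simp
    have th: "theta \<sigma>tr = theta \<sigma>" by (rule theta_scale[OF dtr kp])
    have "rho_e e \<sigma> = \<rho>s * r"
      using True rtrp th by (simp add: rho_e_def r_e_tr_def r_def \<rho>s_def rtr_def)
    moreover have "\<rho>s = pos (rtr - dl * c2)" using rtr2 True by (simp add: pos_def)
    moreover have "\<sigma> = Sf \<sigma>tr (pm \<sigma>) \<rho>s"
    proof -
      have "dev \<sigma> = (\<rho>s / rtr) *\<^sub>R dev \<sigma>tr" using dtr rtr kp True by simp
      hence "\<sigma> = pm \<sigma> *\<^sub>R Id3 + (\<rho>s / rtr) *\<^sub>R dev \<sigma>tr" using decomp[of \<sigma>] by simp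
      thus ?thesis using rtrp by (simp add: Sf_def rtr_def)
    qed
    ultimately show ?thesis by blast
  next
    case False
    hence z: "\<rho>s = 0" using \<rho>s0 by simp
    hence nS: "frob Id3 n = 0" "fnorm n \<le> 1" using n by (auto simp: subdiff_rho_def \<rho>s_def)
    have d0: "dev \<sigma> = 0" using z by (simp add: \<rho>s_def flip: norm_dev_rho)
    have dtr: "dev \<sigma>tr = (dl * c2) *\<^sub>R n" using deveq d0 by simp
    have "rtr = dl * c2 * norm n" using dtr dlp c2p by (simp add: rtr_def flip: norm_dev_rho)
    also have "\<dots> \<le> dl * c2" using nS dlp c2p by (simp add: fnorm_norm mult_left_le)
    finally have "rtr - dl * c2 \<le> 0" by simp
    hence "\<rho>s = pos (rtr - dl * c2)" using z by (simp add: pos_def)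
    moreover have "rho_e e \<sigma> = \<rho>s * r" using z by (simp add: rho_e_def \<rho>s_def)
    moreover have "\<sigma> = Sf \<sigma>tr (pm \<sigma>) \<rho>s" using decomp[of \<sigma>] d0 z by (simp add: Sf_def)
    ultimately show ?thesis by blast
  qed
  have fh: "fhat m0 fc (pm \<sigma>) \<rho>s (\<rho>s * r) = 0" using fz dlp main by (simp add: \<rho>s_def)
  have "probR K G m0 Ag Bg fc ft e \<sigma>tr (pm \<sigma>) (rho \<sigma>) dl"
    unfolding probR_def using pmeq main fh
    by (simp add: c1_def c2_def r_def \<rho>s_def rtr_def mult.assoc)
  moreover have "\<sigma> = Sf \<sigma>tr (pm \<sigma>) (rho \<sigma>)" using main unfolding \<rho>s_def by blast
  ultimately show ?thesis by blast
qed

lemma R_to_P: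
  assumes R: "probR K G m0 Ag Bg fc ft e \<sigma>tr p \<rho> dl"
  shows "probP K G m0 Ag Bg fc ft e \<sigma>tr (Sf \<sigma>tr p \<rho>) dl"
proof -
  define \<sigma> where "\<sigma> = Sf \<sigma>tr p \<rho>"
  define rtr where "rtr = rho \<sigma>tr"
  define ptr where "ptr = pm \<sigma>tr"
  define r where "r = r_e_tr e \<sigma>tr"
  define c1 where "c1 = K * mg' Ag Bg fc ft p / fc"
  define c2 where "c2 = 2 * G * (3 * \<rho> / fc^2 + m0 / (sqrt 6 * fc))"
  have dlp: "dl > 0" using R probR_iff by blast
  have peq: "p = ptr - dl * c1" and req: "\<rho> = pos (rtr - dl * c2)"
    and fh: "fhat m0 fc p \<rho> (\<rho> * r) = 0"
    using R by (simp_all add: probR_def c1_def c2_def ptr_def rtr_def r_def mult.assoc)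
  have \<rho>0: "\<rho> \<ge> 0" using req by (simp add: pos_def)
  have c2p: "c2 > 0" using G fc m0 \<rho>0 by (simp add: c2_def add_nonneg_pos)
  have rtr0: "rtr \<ge> 0" by (simp add: rtr_def rho_nonneg)
  define D where "D = (if rtr > 0 then (\<rho> / rtr) *\<^sub>R dev \<sigma>tr else 0)"
  have \<sigma>: "\<sigma> = p *\<^sub>R Id3 + D" by (simp add: \<sigma>_def Sf_def D_def rtr_def)
  have pmD: "pm D = 0" by (simp add: D_def pm_scale)
  have pms: "pm \<sigma> = p" by (simp add: \<sigma> pm_add pm_scale pmD)
  have devs: "dev \<sigma> = D" by (simp add: \<sigma> dev_add dev_scale dev_pm0[OF pmD])
  have rz: "rtr = 0 \<Longrightarrow> \<rho> = 0"
  proof -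
    assume "rtr = 0"
    hence "rtr - dl * c2 < 0" using dlp c2p by simp
    thus "\<rho> = 0" using req by (simp add: pos_def)
  qed
  have rhos: "rho \<sigma> = \<rho>"
  proof (cases "rtr > 0")
    case True
    thus ?thesis using \<rho>0 by (simp add: devs D_def rtr_def flip: norm_dev_rho)
  next
    case False
    thus ?thesis using rz rtr0 by (simp add: devs D_def flip: norm_dev_rho)
  qed
  have symD: "D \<in> Sym" using Sym_scale[OF Sym_dev[OF Str]] by (simp add: D_def Sym_def transpose_def vec_eq_iff)
  have symS: "\<sigma> \<in> Sym" using symD by (simp add: \<sigma> Sym_add Sym_scale Id3_sym)
  have dtr: "\<sigma>tr = ptr *\<^sub>R Id3 + dev \<sigma>tr" using decomp[of \<sigma>tr] by (simp add: ptr_def)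
  have rhoe: "rho_e e \<sigma> = \<rho> * r"
  proof (cases "\<rho> > 0")
    case True
    hence rp: "rtr > 0" using rz rtr0 by force
    have "dev \<sigma> = (\<rho> / rtr) *\<^sub>R dev \<sigma>tr" using rp by (simp add: devs D_def)
    hence "theta \<sigma> = theta \<sigma>tr" using True rp by (intro theta_scale[where k="\<rho>/rtr"]) auto
    thus ?thesis using True rp rhos by (simp add: rho_e_def r_def r_e_tr_def rtr_def)
  next
    case False
    thus ?thesis using rhos \<rho>0 by (simp add: rho_e_def)
  qed
  have ex: "\<exists>n\<in>subdiff_rho \<sigma>. \<sigma> = \<sigma>tr - dl *\<^sub>R (c1 *\<^sub>R Id3 + c2 *\<^sub>R n)"
  proof (cases "\<rho> > 0")
    case True
    hence rp: "rtr > 0" using rz rtr0 by force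
    have rr: "\<rho> = rtr - dl * c2" using req True by (simp add: pos_def split: if_splits)
    define n where "n = (1 / rtr) *\<^sub>R dev \<sigma>tr"
    have "n \<in> subdiff_rho \<sigma>" using True rhos rp by (simp add: subdiff_rho_def n_def devs D_def)
    moreover have "\<sigma> = \<sigma>tr - dl *\<^sub>R (c1 *\<^sub>R Id3 + c2 *\<^sub>R n)"
    proof -
      have "\<sigma>tr - dl *\<^sub>R (c1 *\<^sub>R Id3 + c2 *\<^sub>R n) = (ptr - dl * c1) *\<^sub>R Id3 + (1 - dl * c2 / rtr) *\<^sub>R dev \<sigma>tr"
        by (subst dtr) (simp add: n_def algebra_simps)
      also have "1 - dl * c2 / rtr = \<rho> / rtr" using rr rp by (simp add: field_simps)
      finally show ?thesis using peq rp by (simp add: \<sigma> D_def)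
    qed
    ultimately show ?thesis by blast
  next
    case False
    hence z: "\<rho> = 0" using \<rho>0 by simp
    have le: "rtr \<le> dl * c2" using req z by (simp add: pos_def max_def split: if_splits)
    define n where "n = (1 / (dl * c2)) *\<^sub>R dev \<sigma>tr"
    have nS: "n \<in> Sym" using Str by (simp add: n_def Sym_scale Sym_dev)
    have nI: "frob Id3 n = 0" by (simp add: n_def frob_Id3_scale frob_Id3_dev)
    have "fnorm n = rtr / (dl * c2)" using dlp c2p
      by (simp add: n_def fnorm_norm rtr_def norm_dev_rho)
    also have "\<dots> \<le> 1" using le dlp c2p by simp
    finally have "n \<in> subdiff_rho \<sigma>" using nS nI z rhos by (simp add: subdiff_rho_def)
    moreover have "\<sigma> = \<sigma>tr - dl *\<^sub>R (c1 *\<^sub>R Id3 + c2 *\<^sub>R n)"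
    proof -
      have "\<sigma>tr - dl *\<^sub>R (c1 *\<^sub>R Id3 + c2 *\<^sub>R n) = (ptr - dl * c1) *\<^sub>R Id3"
        using dlp c2p by (subst dtr) (simp add: n_def algebra_simps)
      thus ?thesis using peq z by (simp add: \<sigma> D_def)
    qed
    ultimately show ?thesis by blast
  qed
  have "probP K G m0 Ag Bg fc ft e \<sigma>tr \<sigma> dl"
    unfolding probP_def using symS ex dlp fh pms rhos rhoe
    by (simp add: c1_def c2_def)
  thus ?thesis by (simp add: \<sigma>_def)
qed

end


theorem theorem6:
  fixes K G m0 Ag Bg fc ft e :: real and \<sigma>tr :: mat3
  assumes "K > 0" "G > 0" "m0 > 0" "Ag > 0" "Bg > 0" "fc > 0" "ft > 0"
    and "1/2 \<le> e" "e \<le> 1"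
    and "\<sigma>tr \<in> Sym"
    and "fhat m0 fc (pm \<sigma>tr) (rho \<sigma>tr) (rho_e e \<sigma>tr) > 0"
  shows "(\<exists>!dl. dl > 0 \<and> q_tr K G m0 Ag Bg fc ft e \<sigma>tr dl = 0)
    \<and> (\<exists>!(p, \<rho>, dl). probR K G m0 Ag Bg fc ft e \<sigma>tr p \<rho> dl)
    \<and> (\<exists>!(\<sigma>, dl). probP K G m0 Ag Bg fc ft e \<sigma>tr \<sigma> dl)
    \<and> (let T = sqrt 6 * fc * rho \<sigma>tr / (2 * G * m0) in
        (q_tr K G m0 Ag Bg fc ft e \<sigma>tr T < 0 \<longrightarrow>
           (\<forall>dl. dl > 0 \<and> q_tr K G m0 Ag Bg fc ft e \<sigma>tr dl = 0 \<longrightarrow> dl < T) \<and>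
           (\<forall>p \<rho> dl. probR K G m0 Ag Bg fc ft e \<sigma>tr p \<rho> dl \<longrightarrow> 0 < dl \<and> dl < T \<and> \<rho> > 0))
      \<and> (q_tr K G m0 Ag Bg fc ft e \<sigma>tr T \<ge> 0 \<longrightarrow>
           (\<forall>dl. dl > 0 \<and> q_tr K G m0 Ag Bg fc ft e \<sigma>tr dl = 0 \<longrightarrow> dl \<ge> T) \<and>
           (\<forall>p \<rho> dl. probR K G m0 Ag Bg fc ft e \<sigma>tr p \<rho> dl \<longrightarrow> dl \<ge> T \<and> \<rho> = 0)))"
proof -
  note ctx = ctx[OF assms]
  define Q where "Q = Qf K G m0 Ag Bg fc ft (pm \<sigma>tr) (rho \<sigma>tr) (r_e_tr e \<sigma>tr)"
  define q where "q = q_tr K G m0 Ag Bg fc ft e \<sigma>tr"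
  define PH where "PH = phat_tr K Ag Bg fc ft (pm \<sigma>tr)"
  define RR where "RR = Rf G m0 fc (rho \<sigma>tr)"
  have qe: "\<gamma> \<ge> 0 \<Longrightarrow> q \<gamma> = Q \<gamma>" for \<gamma> using q_eq[OF assms] by (simp add: q_def Q_def)
  have Rchar: "probR K G m0 Ag Bg fc ft e \<sigma>tr p \<rho> dl \<longleftrightarrow> (dl > 0 \<and> Q dl = 0 \<and> p = PH dl \<and> \<rho> = RR dl)"
    for p \<rho> dl using probR_iff[OF assms] by (simp add: Q_def PH_def RR_def)
  obtain d where d: "d > 0" "Q d = 0" and du: "\<And>y. y > 0 \<Longrightarrow> Q y = 0 \<Longrightarrow> y = d"
    using Qf_ex1[OF ctx] unfolding Q_def by metis
  have P1: "\<exists>!dl. dl > 0 \<and> q dl = 0"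
    using d du qe by (metis less_imp_le)
  have P2: "\<exists>!(p, \<rho>, dl). probR K G m0 Ag Bg fc ft e \<sigma>tr p \<rho> dl"
  proof (rule ex1I[of _ "(PH d, RR d, d)"])
    show "case (PH d, RR d, d) of (p, \<rho>, dl) \<Rightarrow> probR K G m0 Ag Bg fc ft e \<sigma>tr p \<rho> dl"
      using Rchar d by simp
  next
    fix x assume "case x of (p, \<rho>, dl) \<Rightarrow> probR K G m0 Ag Bg fc ft e \<sigma>tr p \<rho> dl"
    then obtain p \<rho> dl where x: "x = (p, \<rho>, dl)" "probR K G m0 Ag Bg fc ft e \<sigma>tr p \<rho> dl"
      by (cases x) auto
    thus "x = (PH d, RR d, d)" using Rchar du by auto
  qed
  have P3: "\<exists>!(\<sigma>, dl). probP K G m0 Ag Bg fc ft e \<sigma>tr \<sigma> dl"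
  proof (rule ex1I[of _ "(Sf \<sigma>tr (PH d) (RR d), d)"])
    show "case (Sf \<sigma>tr (PH d) (RR d), d) of (\<sigma>, dl) \<Rightarrow> probP K G m0 Ag Bg fc ft e \<sigma>tr \<sigma> dl"
      using R_to_P[OF assms] Rchar d by simp
  next
    fix x assume "case x of (\<sigma>, dl) \<Rightarrow> probP K G m0 Ag Bg fc ft e \<sigma>tr \<sigma> dl"
    then obtain \<sigma> dl where x: "x = (\<sigma>, dl)" "probP K G m0 Ag Bg fc ft e \<sigma>tr \<sigma> dl"
      by (cases x) auto
    from P_to_R[OF assms x(2)] have
      "probR K G m0 Ag Bg fc ft e \<sigma>tr (pm \<sigma>) (rho \<sigma>) dl" "\<sigma> = Sf \<sigma>tr (pm \<sigma>) (rho \<sigma>)" by auto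
    thus "x = (Sf \<sigma>tr (PH d) (RR d), d)" using Rchar du x(1) by auto
  qed
  define T where "T = sqrt 6 * fc * rho \<sigma>tr / (2 * G * m0)"
  have T0: "T \<ge> 0" using assms rho_nonneg[of \<sigma>tr] by (simp add: T_def)
  have RZ: "\<gamma> \<ge> 0 \<Longrightarrow> RR \<gamma> = 0 \<longleftrightarrow> \<gamma> \<ge> T" for \<gamma>
    using Rf_zero_iff[OF ctx] by (simp add: RR_def T_def)
  have RN: "\<gamma> \<ge> 0 \<Longrightarrow> RR \<gamma> \<ge> 0" for \<gamma> using Rf_nonneg[OF ctx] by (simp add: RR_def)
  have A: "(\<forall>dl. dl > 0 \<and> q dl = 0 \<longrightarrow> dl < T) \<and>
           (\<forall>p \<rho> dl. probR K G m0 Ag Bg fc ft e \<sigma>tr p \<rho> dl \<longrightarrow> 0 < dl \<and> dl < T \<and> \<rho> > 0)"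
    if qT: "q T < 0"
  proof -
    have lt: "dl < T" if "dl > 0" "Q dl = 0" for dl
    proof (rule ccontr)
      assume "\<not> dl < T"
      hence "Q dl \<le> Q T" using Qf_mono[OF ctx T0, where ft=ft] unfolding Q_def by simp
      thus False using that qT qe[OF T0] by simp
    qed
    show ?thesis
    proof (intro conjI allI impI)
      fix dl assume "dl > 0 \<and> q dl = 0" thus "dl < T" using lt qe by force
    next
      fix p \<rho> dl assume R: "probR K G m0 Ag Bg fc ft e \<sigma>tr p \<rho> dl"
      hence h: "dl > 0" "Q dl = 0" "\<rho> = RR dl" using Rchar by auto
      show "0 < dl" using h by simp
      show "dl < T" using lt h by simp
      have "dl < T" using lt h by simp
      hence "RR dl \<noteq> 0" using RZ[of dl] h(1) by auto
      thus "\<rho> > 0" using RN[of dl] h by simp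
    qed
  qed
  have B: "(\<forall>dl. dl > 0 \<and> q dl = 0 \<longrightarrow> dl \<ge> T) \<and>
           (\<forall>p \<rho> dl. probR K G m0 Ag Bg fc ft e \<sigma>tr p \<rho> dl \<longrightarrow> dl \<ge> T \<and> \<rho> = 0)"
    if qT: "q T \<ge> 0"
  proof -
    have ge: "dl \<ge> T" if "dl > 0" "Q dl = 0" for dl
    proof (rule ccontr)
      assume "\<not> dl \<ge> T"
      hence "Q T < Q dl" using Qf_strict[OF ctx, of dl T, where ft=ft] that(1) unfolding Q_def by simp
      thus False using that qT qe[OF T0] by simp
    qed
    show ?thesis
    proof (intro conjI allI impI)
      fix dl assume "dl > 0 \<and> q dl = 0" thus "dl \<ge> T" using ge qe by force
    next
      fix p \<rho> dl assume R: "probR K G m0 Ag Bg fc ft e \<sigma>tr p \<rho> dl"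
      hence h: "dl > 0" "Q dl = 0" "\<rho> = RR dl" using Rchar by auto
      show "dl \<ge> T" using ge h by simp
      thus "\<rho> = 0" using RZ[of dl] h by simp
    qed
  qed
  show ?thesis using P1 P2 P3 A B unfolding q_def T_def Let_def by blast
qed

end
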